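(* Let $A$ be a DFA over a finite alphabet $\Sigma$ and let $S=s_1,\ldots,s_l$ be any non-empty sequence of strings $s_i\in\Sigma^*$. For any execution of prefix-free IDS on $S$ (with teacher $A$) there exists an execution of ID on the input set $\{\lambda,s_1,\ldots,s_l\}$ (with teacher $A$) such that for all $m\ge 0$: (i) for all $n\ge0$, if $K(n)=m$ then (a) for all $0\le j\le n$, $v_j^{IDS}=v_j^{ID}$; (b) for all $0\le j<n$, $v_n^{IDS}\neq v_j^{IDS}$; (c) for all $\alpha\in T_m^{IDS}$, $E_n^{IDS}(\alpha)=\{v_j^{IDS}: 0\le j\le n,\ \alpha v_j^{IDS}\in L(A)\}$; (ii) if $m>0$, letting $p$ be the greatest integer with $K(p)=m-1$, then for all $\alpha\in T_m^{IDS}$, $E_p^{IDS}(\alpha)=\{v_j^{IDS}:0\le j\le p,\ \alpha v_j^{IDS}\in L(A)\}$; (iii) the $m$-th partition refinement of IDS (the run of the refinement procedure while $k=m$) terminates.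
   Context: Let $A=\langle\Sigma,Q,F,q_0,\delta\rangle$ be a DFA with finite alphabet $\Sigma$ and language $L(A)$; $\lambda$ is the empty string. Membership queries "is $w\in L(A)$?" are answered correctly. Let $d_0$ be a fresh symbol not in $\Sigma^*$; $f(d_0,b)=d_0$ and $f(\alpha,b)=\alpha b$ for $\alpha\in\Sigma^*$. $U\oplus V=(U-V)\cup(V-U)$. Refinement procedure with respect to a finite set $P'$ (containing $d_0$) and a finite set $T\subseteq\Sigma^*$: while there exist $\alpha,\beta\in P'$ and $b\in\Sigma$ with $E_i(\alpha)=E_i(\beta)$ but $E_i(f(\alpha,b))\neq E_i(f(\beta,b))$: choose (nondeterministically) such $\alpha,\beta,b$ and some $\gamma\in E_i(f(\alpha,b))\oplus E_i(f(\beta,b))$, set $v_{i+1}=b\gamma$, increase $i$ by one, and for each $\alpha'\in T$ set $E_i(\alpha')=E_{i-1}(\alpha')\cup\{v_i\}$ if $\alpha' v_i\in L(A)$, else $E_i(\alpha')=E_{i-1}(\alpha')$. Always $E_i(d_0)=\emptyset$. ID algorithm (input: finite $P\subseteq\Sigma^*$): $P'=P\cup\{d_0\}$, $T=P\cup\{\alpha b:\alpha\in P,b\in\Sigma\}$, $i=0$, $v_0=\lambda$, $E_0(\alpha)=\{\lambda\}$ if $\alpha\in L(A)$ else $\emptyset$ for $\alpha\in T$; then run the refinement procedure w.r.t. $P'$ and $T$ (and then build a hypothesis automaton from the resulting sets). The values of its variables are denoted $v_j^{ID}$, $E_n^{ID}(\alpha)$. Prefix-free IDS algorithm (input: sequence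 $S=s_1,\ldots,s_l$): initialize $i=k=t=0$, $v_0=\lambda$, $P_0=\{\lambda\}$, $T_0=\{\lambda\}\cup\Sigma$, $E_0(\alpha)=\{\lambda\}$ if $\alpha\in L(A)$ else $\emptyset$ for $\alpha\in T_0$; run the refinement procedure w.r.t. $P'_0=P_0\cup\{d_0\}$ and $T_0$ and build hypothesis $M_0$. Then for each string $\alpha$ of $S$ in order: increase $k,t$ by one; $P_k=P_{k-1}\cup\{\alpha\}$, $P'_k=P_k\cup\{d_0\}$, $T_k=T_{k-1}\cup\{\alpha\}\cup\{\alpha b:b\in\Sigma\}$; for each $\beta\in T_k-T_{k-1}$ set $E_i(\beta)=\{v_j:0\le j\le i,\ \beta v_j\in L(A)\}$; run the refinement procedure w.r.t. $P'_k$ and $T_k$ (this is the $k$-th partition refinement); then produce hypothesis $M_t$ (equal to $M_{t-1}$ if $M_{t-1}$ classifies $\alpha$ correctly, otherwise newly constructed from the current sets $E_i$). Values of its variables are denoted $v_j^{IDS}$, $E_n^{IDS}(\alpha)$, $T_m^{IDS}$ (where $E_n^{IDS}(\alpha)$ is the value assigned to $E_i(\alpha)$ while $i=n$). Re-indexing function: $K=K^S:\mathbb N\to\mathbb N$ is the unique monotonically increasing function such that for each $n$, $K(n)$ is the least integer $m$ such that the variable $k$ of IDS has value $m$ while the variable $i$ has value $n$ (so $K(0)=0$). *)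

theory Defs
  imports Main
begin

definition dfa :: "'a set \<Rightarrow> 's set \<Rightarrow> ('s \<Rightarrow> 'a \<Rightarrow> 's) \<Rightarrow> 's \<Rightarrow> 's set \<Rightarrow> bool" where
  "dfa Sig Q delta q0 F \<longleftrightarrow> finite Sig \<and> finite Q \<and> q0 \<in> Q \<and> F \<subseteq> Q \<and>
     (\<forall>q\<in>Q. \<forall>a\<in>Sig. delta q a \<in> Q)"

definition dfa_lang :: "'a set \<Rightarrow> ('s \<Rightarrow> 'a \<Rightarrow> 's) \<Rightarrow> 's \<Rightarrow> 's set \<Rightarrow> 'a list set" where
  "dfa_lang Sig delta q0 F = {w. set w \<subseteq> Sig \<and> foldl delta q0 w \<in> F}"

text \<open>Elements of P' are represented as options: None is the fresh symbol d0,
  Some alpha is the string alpha.\<close>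
fun fext :: "'a list option \<Rightarrow> 'a \<Rightarrow> 'a list option" where
  "fext None b = None"
| "fext (Some al) b = Some (al @ [b])"

fun Eo :: "('a list \<Rightarrow> 'a list set) \<Rightarrow> 'a list option \<Rightarrow> 'a list set" where
  "Eo E None = {}"
| "Eo E (Some al) = E al"

definition Pd :: "'a list set \<Rightarrow> 'a list option set" where
  "Pd P = insert None (Some ` P)"

definition symdiff :: "'b set \<Rightarrow> 'b set \<Rightarrow> 'b set" where
  "symdiff U V = (U - V) \<union> (V - U)"

definition refine_enabled :: "'a set \<Rightarrow> 'a list set \<Rightarrow> ('a list \<Rightarrow> 'a list set) \<Rightarrow> bool" where
  "refine_enabled Sig P E \<longleftrightarrow>
     (\<exists>al\<in>Pd P. \<exists>be\<in>Pd P. \<exists>b\<in>Sig. Eo E al = Eo E be \<and> Eo E (fext al b) \<noteq> Eo E (fext be b))"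

text \<open>One (nondeterministic) iteration of the refinement procedure w.r.t. P' = P + {d0} and T;
  the state is (i, v, E) where v j is v_j and E is the current E_i.\<close>
definition refine_step ::
  "'a set \<Rightarrow> 'a list set \<Rightarrow> 'a list set \<Rightarrow> 'a list set \<Rightarrow>
   nat \<times> (nat \<Rightarrow> 'a list) \<times> ('a list \<Rightarrow> 'a list set) \<Rightarrow>
   nat \<times> (nat \<Rightarrow> 'a list) \<times> ('a list \<Rightarrow> 'a list set) \<Rightarrow> bool" where
  "refine_step Sig L P T st st' \<longleftrightarrow>
    (case st of (i, v, E) \<Rightarrow>
      \<exists>al\<in>Pd P. \<exists>be\<in>Pd P. \<exists>b\<in>Sig. \<exists>ga.
        Eo E al = Eo E be \<and> Eo E (fext al b) \<noteq> Eo E (fext be b) \<and>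
        ga \<in> symdiff (Eo E (fext al b)) (Eo E (fext be b)) \<and>
        st' = (Suc i, v(Suc i := b # ga),
               (\<lambda>x. if x \<in> T \<and> x @ (b # ga) \<in> L then E x \<union> {b # ga} else E x)))"

definition Tset :: "'a set \<Rightarrow> 'a list set \<Rightarrow> 'a list set" where
  "Tset Sig P = P \<union> {al @ [b] | al b. al \<in> P \<and> b \<in> Sig}"

definition E_init :: "'a list set \<Rightarrow> 'a list set \<Rightarrow> 'a list \<Rightarrow> 'a list set" where
  "E_init L T = (\<lambda>al. if al \<in> T \<and> al \<in> L then {[]} else {})"

type_synonym 'a id_cfg = "nat \<times> (nat \<Rightarrow> 'a list) \<times> ('a list \<Rightarrow> 'a list set)"

text \<open>A maximal execution of ID on input P (finite executions are
  extended by stuttering at the final configuration). Building the hypothesis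
  does not change the variables and is omitted.\<close>
definition id_run :: "'a set \<Rightarrow> 'a list set \<Rightarrow> 'a list set \<Rightarrow> (nat \<Rightarrow> 'a id_cfg) \<Rightarrow> bool" where
  "id_run Sig L P d \<longleftrightarrow>
     d 0 = (0, (\<lambda>_. []), E_init L (Tset Sig P)) \<and>
     (\<forall>t. refine_step Sig L P (Tset Sig P) (d t) (d (Suc t)) \<or>
          ((\<nexists>st. refine_step Sig L P (Tset Sig P) (d t) st) \<and> d (Suc t) = d t))"

abbreviation id_i :: "'a id_cfg \<Rightarrow> nat" where "id_i st \<equiv> fst st"
abbreviation id_v :: "'a id_cfg \<Rightarrow> nat \<Rightarrow> 'a list" where "id_v st \<equiv> fst (snd st)"

datatype 'a ids_cfg = Cfg (ck: nat) (ci: nat) (cv: "nat \<Rightarrow> 'a list") (cE: "'a list \<Rightarrow> 'a list set")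

definition Pk :: "'a list list \<Rightarrow> nat \<Rightarrow> 'a list set" where
  "Pk S k = insert [] (set (take k S))"

definition Tk :: "'a set \<Rightarrow> 'a list list \<Rightarrow> nat \<Rightarrow> 'a list set" where
  "Tk Sig S k = Tset Sig (Pk S k)"

definition ids_step :: "'a set \<Rightarrow> 'a list set \<Rightarrow> 'a list list \<Rightarrow> 'a ids_cfg \<Rightarrow> 'a ids_cfg \<Rightarrow> bool" where
  "ids_step Sig L S c c' \<longleftrightarrow>
     \<comment> \<open>an iteration of the k-th partition refinement\<close>
     (ck c' = ck c \<and>
      refine_step Sig L (Pk S (ck c)) (Tk Sig S (ck c)) (ci c, cv c, cE c) (ci c', cv c', cE c'))
   \<or> \<comment> \<open>the k-th refinement has terminated: process the next string of S\<close>
     (\<not> refine_enabled Sig (Pk S (ck c)) (cE c) \<and> ck c < length S \<and>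
      c' = Cfg (Suc (ck c)) (ci c) (cv c)
             (\<lambda>be. if be \<in> Tk Sig S (Suc (ck c)) - Tk Sig S (ck c)
                   then {cv c j | j. j \<le> ci c \<and> be @ cv c j \<in> L}
                   else cE c be))"

definition ids_init :: "'a set \<Rightarrow> 'a list set \<Rightarrow> 'a list list \<Rightarrow> 'a ids_cfg" where
  "ids_init Sig L S = Cfg 0 0 (\<lambda>_. []) (E_init L (Tk Sig S 0))"

text \<open>A maximal execution of prefix-free IDS on S (finite executions are extended
  by stuttering at the final configuration).\<close>
definition ids_run :: "'a set \<Rightarrow> 'a list set \<Rightarrow> 'a list list \<Rightarrow> (nat \<Rightarrow> 'a ids_cfg) \<Rightarrow> bool" where
  "ids_run Sig L S c \<longleftrightarrow>
     c 0 = ids_init Sig L S \<and>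
     (\<forall>t. ids_step Sig L S (c t) (c (Suc t)) \<or>
          ((\<nexists>c'. ids_step Sig L S (c t) c') \<and> c (Suc t) = c t))"

text \<open>K(n) = m: m is the least value of k while i has value n (and i reaches n).\<close>
definition Kis :: "(nat \<Rightarrow> 'a ids_cfg) \<Rightarrow> nat \<Rightarrow> nat \<Rightarrow> bool" where
  "Kis c n m \<longleftrightarrow> (\<exists>t. ci (c t) = n \<and> ck (c t) = m) \<and> (\<forall>t. ci (c t) = n \<longrightarrow> m \<le> ck (c t))"

end

theory Submission
  imports Defs
begin


definition corr :: "'a list set \<Rightarrow> 'a list set \<Rightarrow> nat \<Rightarrow> (nat \<Rightarrow> 'a list) \<Rightarrow> ('a list \<Rightarrow> 'a list set) \<Rightarrow> bool" where
  "corr L T i v E \<longleftrightarrow> (\<forall>x\<in>T. E x = {v j | j. j \<le> i \<and> x @ v j \<in> L})"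

definition closedP :: "'a set \<Rightarrow> 'a list set \<Rightarrow> 'a list set \<Rightarrow> bool" where
  "closedP Sig P T \<longleftrightarrow> (\<forall>a\<in>P. a \<in> T \<and> (\<forall>b\<in>Sig. a @ [b] \<in> T))"

lemma closedP_Tset: "closedP Sig P (Tset Sig P)" unfolding closedP_def Tset_def by auto

lemma corr_mem: "corr L T i v E \<Longrightarrow> x \<in> T \<Longrightarrow> y \<in> E x \<longleftrightarrow> (\<exists>j\<le>i. y = v j \<and> x @ v j \<in> L)"
  by (auto simp: corr_def)

lemma sep:
  assumes c: "corr L T i v E" and cl: "closedP Sig P T"
    and al: "al \<in> Pd P" and be: "be \<in> Pd P" and b: "b \<in> Sig"
    and eq: "Eo E al = Eo E be" and g1: "ga \<in> Eo E (fext al b)" and g2: "ga \<notin> Eo E (fext be b)"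
  shows "b#ga \<notin> v ` {..i} \<and> (\<exists>a. al = Some a \<and> a \<in> T \<and> a @ (b#ga) \<in> L) \<and>
         (be = None \<or> (\<exists>\<beta>. be = Some \<beta> \<and> \<beta> \<in> T \<and> \<beta> @ (b#ga) \<notin> L))"
proof -
  obtain a where a: "al = Some a" "a \<in> P" using al g1 by (cases al) (auto simp: Pd_def)
  have aT: "a \<in> T" "a @ [b] \<in> T" using cl a b by (auto simp: closedP_def)
  from g1 a have "ga \<in> E (a @ [b])" by simp
  then obtain j where j: "j \<le> i" "ga = v j" "a @ [b] @ v j \<in> L" using corr_mem[OF c aT(2)] by auto
  have aL: "a @ (b#ga) \<in> L" using j by simp
  have beL: "be = None \<or> (\<exists>\<beta>. be = Some \<beta> \<and> \<beta> \<in> T \<and> \<beta> @ (b#ga) \<notin> L)"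
  proof (cases be)
    case None then show ?thesis by simp
  next
    case (Some \<beta>)
    with be have "\<beta> \<in> P" by (auto simp: Pd_def)
    hence bT: "\<beta> \<in> T" "\<beta> @ [b] \<in> T" using cl b by (auto simp: closedP_def)
    moreover have "ga \<notin> E (\<beta> @ [b])" using g2 Some by simp
    ultimately have "\<beta> @ (b#ga) \<notin> L" using corr_mem[OF c bT(2)] j by fastforce
    with Some bT show ?thesis by simp
  qed
  have "b#ga \<notin> v ` {..i}"
  proof
    assume "b#ga \<in> v ` {..i}"
    then obtain j0 where j0: "j0 \<le> i" "b#ga = v j0" by auto
    have "b#ga \<in> E a" using corr_mem[OF c aT(1)] j0 aL by metis
    hence bin: "b#ga \<in> Eo E be" using eq a by simp
    show False
    proof (cases be)
      case None then show ?thesis using bin by simp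
    next
      case (Some \<beta>)
      then have bT: "\<beta> \<in> T" "\<beta> @ (b#ga) \<notin> L" using beL by auto
      have "b#ga \<in> E \<beta>" using bin Some by simp
      then show False using corr_mem[OF c bT(1)] bT(2) by metis
    qed
  qed
  then show ?thesis using a aT aL beL by blast
qed

definition updE :: "'a list set \<Rightarrow> 'a list set \<Rightarrow> ('a list \<Rightarrow> 'a list set) \<Rightarrow> 'a list \<Rightarrow> 'a list \<Rightarrow> 'a list set" where
  "updE L T E w = (\<lambda>x. if x \<in> T \<and> x @ w \<in> L then E x \<union> {w} else E x)"

lemma sepE:
  assumes c: "corr L T i v E" and w: "w \<notin> v ` {..i}" and a: "a \<in> T" "a @ w \<in> L"
    and be: "be = None \<or> (\<exists>\<beta>. be = Some \<beta> \<and> \<beta> \<in> T \<and> \<beta> @ w \<notin> L)"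
  shows "Eo (updE L T E w) (Some a) \<noteq> Eo (updE L T E w) be"
proof -
  have "w \<in> Eo (updE L T E w) (Some a)" using a by (simp add: updE_def)
  moreover have "w \<notin> Eo (updE L T E w) be"
  proof (cases be)
    case None then show ?thesis by simp
  next
    case (Some \<beta>)
    then have bT: "\<beta> \<in> T" "\<beta> @ w \<notin> L" using be by auto
    have "w \<notin> E \<beta>" using corr_mem[OF c bT(1)] w by auto
    then show ?thesis using Some bT by (simp add: updE_def)
  qed
  ultimately show ?thesis by metis
qed

lemma rstep:
  assumes c: "corr L T i v E" and cl: "closedP Sig P T"
   and st: "refine_step Sig L P T (i,v,E) (i',v',E')"
  shows "\<exists>w. i' = Suc i \<and> v' = v(Suc i := w) \<and> E' = updE L T E w \<and> w \<notin> v ` {..i} \<and>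
     (\<exists>al\<in>Pd P. \<exists>be\<in>Pd P. Eo E al = Eo E be \<and> Eo E' al \<noteq> Eo E' be)"
proof -
  from st obtain al be b ga where al: "al \<in> Pd P" and be: "be \<in> Pd P" and b: "b \<in> Sig"
    and eq: "Eo E al = Eo E be" and sd: "ga \<in> symdiff (Eo E (fext al b)) (Eo E (fext be b))"
    and res: "i' = Suc i" "v' = v(Suc i := b # ga)" "E' = updE L T E (b#ga)"
    unfolding refine_step_def updE_def by auto
  show ?thesis
  proof (cases "ga \<in> Eo E (fext al b)")
    case True
    with sd have "ga \<notin> Eo E (fext be b)" by (auto simp: symdiff_def)
    from sep[OF c cl al be b eq True this] obtain a where
      A: "b#ga \<notin> v ` {..i}" "al = Some a" "a \<in> T" "a @ (b#ga) \<in> L"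
      "be = None \<or> (\<exists>\<beta>. be = Some \<beta> \<and> \<beta> \<in> T \<and> \<beta> @ (b#ga) \<notin> L)" by blast
    have "Eo E' al \<noteq> Eo E' be" using sepE[OF c A(1) A(3) A(4) A(5)] A(2) res(3) by simp
    then show ?thesis using res A(1) al be eq by blast
  next
    case False
    with sd have g: "ga \<in> Eo E (fext be b)" by (auto simp: symdiff_def)
    from sep[OF c cl be al b eq[symmetric] g False] obtain a where
      A: "b#ga \<notin> v ` {..i}" "be = Some a" "a \<in> T" "a @ (b#ga) \<in> L"
      "al = None \<or> (\<exists>\<beta>. al = Some \<beta> \<and> \<beta> \<in> T \<and> \<beta> @ (b#ga) \<notin> L)" by blast
    have "Eo E' be \<noteq> Eo E' al" using sepE[OF c A(1) A(3) A(4) A(5)] A(2) res(3) by simp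
    then show ?thesis using res A(1) al be eq by metis
  qed
qed

lemma set_upd:
  "{(v(Suc i := w)) j | j. j \<le> Suc i \<and> x @ (v(Suc i := w)) j \<in> L} =
   (if x @ w \<in> L then {v j | j. j \<le> i \<and> x @ v j \<in> L} \<union> {w} else {v j | j. j \<le> i \<and> x @ v j \<in> L})"
  (is "?A = ?B")
proof (rule set_eqI)
  fix y
  have "y \<in> ?A \<longleftrightarrow> (\<exists>j\<le>i. y = v j \<and> x @ v j \<in> L) \<or> (y = w \<and> x @ w \<in> L)"
  proof
    assume "y \<in> ?A"
    then obtain j where j: "y = (v(Suc i := w)) j" "j \<le> Suc i" "x @ (v(Suc i := w)) j \<in> L" by blast
    show "(\<exists>j\<le>i. y = v j \<and> x @ v j \<in> L) \<or> (y = w \<and> x @ w \<in> L)"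
    proof (cases "j = Suc i")
      case True thus ?thesis using j by simp
    next
      case False hence "j \<le> i" using j by simp
      thus ?thesis using j False by auto
    qed
  next
    assume "(\<exists>j\<le>i. y = v j \<and> x @ v j \<in> L) \<or> (y = w \<and> x @ w \<in> L)"
    then show "y \<in> ?A"
    proof
      assume "\<exists>j\<le>i. y = v j \<and> x @ v j \<in> L"
      then obtain j where j: "j \<le> i" "y = v j" "x @ v j \<in> L" by blast
      then have "y = (v(Suc i := w)) j \<and> j \<le> Suc i \<and> x @ (v(Suc i := w)) j \<in> L" by simp
      then show ?thesis by blast
    next
      assume "y = w \<and> x @ w \<in> L"
      then have "y = (v(Suc i := w)) (Suc i) \<and> Suc i \<le> Suc i \<and> x @ (v(Suc i := w)) (Suc i) \<in> L" by simp
      then show ?thesis by blast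
    qed
  qed
  moreover have "y \<in> ?B \<longleftrightarrow> (\<exists>j\<le>i. y = v j \<and> x @ v j \<in> L) \<or> (y = w \<and> x @ w \<in> L)"
    by (cases "x @ w \<in> L") auto
  ultimately show "y \<in> ?A \<longleftrightarrow> y \<in> ?B" by blast
qed

lemma corr_upd: "corr L T i v E \<Longrightarrow> corr L T (Suc i) (v(Suc i := w)) (updE L T E w)"
  unfolding corr_def updE_def by (simp only: set_upd) auto

lemma inj_upd: "inj_on v {..i} \<Longrightarrow> w \<notin> v ` {..i} \<Longrightarrow> inj_on (v(Suc i := w)) {..Suc i}"
proof -
  assume a: "inj_on v {..i}" "w \<notin> v ` {..i}"
  have "inj_on (v(Suc i := w)) {..i}" using a(1) by (simp add: inj_on_def)
  moreover have "(v(Suc i := w)) ` {..i} = v ` {..i}" by auto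
  ultimately show ?thesis using a(2) by (simp add: atMost_Suc)
qed

lemma card_incr:
  assumes fin: "finite P" and c: "corr L T i v E" and cl: "closedP Sig P T"
   and st: "refine_step Sig L P T (i,v,E) (i',v',E')"
  shows "card (Eo E ` Pd P) < card (Eo E' ` Pd P)"
proof -
  obtain w al be where R: "E' = updE L T E w" "w \<notin> v ` {..i}" "al \<in> Pd P" "be \<in> Pd P"
    "Eo E al = Eo E be" "Eo E' al \<noteq> Eo E' be"
    using rstep[OF c cl st] by blast
  define f where "f = (\<lambda>X. X - {w})"
  have key: "Eo E x = f (Eo E' x)" if "x \<in> Pd P" for x
  proof (cases x)
    case None then show ?thesis by (simp add: f_def)
  next
    case (Some a)
    with that have "a \<in> T" using cl by (auto simp: Pd_def closedP_def)
    hence "w \<notin> E a" using corr_mem[OF c] R(2) by blast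
    then show ?thesis using Some R(1) by (auto simp: f_def updE_def)
  qed
  have img: "Eo E ` Pd P = f ` (Eo E' ` Pd P)" using key by (auto simp: image_image)
  have finP: "finite (Pd P)" using fin by (simp add: Pd_def)
  have ninj: "\<not> inj_on f (Eo E' ` Pd P)"
    using R(3-6) key unfolding inj_on_def by (metis imageI)
  have "card (f ` (Eo E' ` Pd P)) \<noteq> card (Eo E' ` Pd P)"
    using ninj finP inj_on_iff_eq_card by blast
  moreover have "card (f ` (Eo E' ` Pd P)) \<le> card (Eo E' ` Pd P)" using finP card_image_le by blast
  ultimately show ?thesis using img by simp
qed



definition invc :: "'a set \<Rightarrow> 'a list set \<Rightarrow> 'a list list \<Rightarrow> 'a ids_cfg \<Rightarrow> bool" where
  "invc Sig L S cf \<longleftrightarrow> corr L (Tk Sig S (ck cf)) (ci cf) (cv cf) (cE cf) \<and>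
     (\<forall>j>ci cf. cv cf j = []) \<and> cv cf 0 = [] \<and> inj_on (cv cf) {..ci cf}"

lemma closed_Tk: "closedP Sig (Pk S k) (Tk Sig S k)"
  by (simp add: Tk_def closedP_Tset)

lemma step_enabled: "refine_step Sig L P T (i,v,E) st' \<Longrightarrow> refine_enabled Sig P E"
  unfolding refine_step_def refine_enabled_def by blast

lemma enabled_step: "refine_enabled Sig P E \<Longrightarrow> \<exists>st'. refine_step Sig L P T (i,v,E) st'"
proof -
  assume "refine_enabled Sig P E"
  then obtain al be b where A: "al \<in> Pd P" "be \<in> Pd P" "b \<in> Sig" "Eo E al = Eo E be"
    "Eo E (fext al b) \<noteq> Eo E (fext be b)" unfolding refine_enabled_def by blast
  then obtain ga where "ga \<in> symdiff (Eo E (fext al b)) (Eo E (fext be b))"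
    unfolding symdiff_def by blast
  then show ?thesis using A unfolding refine_step_def by blast
qed

lemma rshape: "refine_step Sig L P T (i,v,E) (i',v',E') \<Longrightarrow> i' = Suc i \<and> (\<forall>j\<le>i. v' j = v j)"
  unfolding refine_step_def by auto

lemma ids_step_cases:
  assumes "ids_step Sig L S cf cf'"
  shows "(ck cf' = ck cf \<and> refine_step Sig L (Pk S (ck cf)) (Tk Sig S (ck cf)) (ci cf, cv cf, cE cf) (ci cf', cv cf', cE cf')
          \<and> ci cf' = Suc (ci cf) \<and> (\<forall>j\<le>ci cf. cv cf' j = cv cf j))
       \<or> (\<not> refine_enabled Sig (Pk S (ck cf)) (cE cf) \<and> ck cf < length S \<and>
          ck cf' = Suc (ck cf) \<and> ci cf' = ci cf \<and> cv cf' = cv cf \<and>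
          cE cf' = (\<lambda>be. if be \<in> Tk Sig S (Suc (ck cf)) - Tk Sig S (ck cf)
                   then {cv cf j | j. j \<le> ci cf \<and> be @ cv cf j \<in> L}
                   else cE cf be))"
proof -
  from assms[unfolded ids_step_def] show ?thesis
  proof (elim disjE conjE)
    assume a: "ck cf' = ck cf" and r: "refine_step Sig L (Pk S (ck cf)) (Tk Sig S (ck cf)) (ci cf, cv cf, cE cf) (ci cf', cv cf', cE cf')"
    then show ?thesis using rshape[OF r] by blast
  next
    assume "\<not> refine_enabled Sig (Pk S (ck cf)) (cE cf)" "ck cf < length S" and e: "cf' = Cfg (Suc (ck cf)) (ci cf) (cv cf)
             (\<lambda>be. if be \<in> Tk Sig S (Suc (ck cf)) - Tk Sig S (ck cf)
                   then {cv cf j | j. j \<le> ci cf \<and> be @ cv cf j \<in> L}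
                   else cE cf be)"
    then show ?thesis by simp
  qed
qed

lemma invc_step:
  assumes I: "invc Sig L S cf" and st: "ids_step Sig L S cf cf'"
  shows "invc Sig L S cf'"
  using ids_step_cases[OF st]
proof
  assume A: "ck cf' = ck cf \<and> refine_step Sig L (Pk S (ck cf)) (Tk Sig S (ck cf)) (ci cf, cv cf, cE cf) (ci cf', cv cf', cE cf')
          \<and> ci cf' = Suc (ci cf) \<and> (\<forall>j\<le>ci cf. cv cf' j = cv cf j)"
  have c: "corr L (Tk Sig S (ck cf)) (ci cf) (cv cf) (cE cf)" using I by (simp add: invc_def)
  obtain w where W: "ci cf' = Suc (ci cf)" "cv cf' = (cv cf)(Suc (ci cf) := w)"
    "cE cf' = updE L (Tk Sig S (ck cf)) (cE cf) w" "w \<notin> cv cf ` {..ci cf}"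
    using rstep[OF c closed_Tk] A by blast
  have "corr L (Tk Sig S (ck cf')) (ci cf') (cv cf') (cE cf')" using corr_upd[OF c] A W by simp
  moreover have "inj_on (cv cf') {..ci cf'}" using inj_upd[OF _ W(4)] I W unfolding invc_def by simp
  moreover have "\<forall>j>ci cf'. cv cf' j = []" "cv cf' 0 = []" using I W unfolding invc_def by auto
  ultimately show ?thesis unfolding invc_def by simp
next
  assume A: "\<not> refine_enabled Sig (Pk S (ck cf)) (cE cf) \<and> ck cf < length S \<and>
          ck cf' = Suc (ck cf) \<and> ci cf' = ci cf \<and> cv cf' = cv cf \<and>
          cE cf' = (\<lambda>be. if be \<in> Tk Sig S (Suc (ck cf)) - Tk Sig S (ck cf)
                   then {cv cf j | j. j \<le> ci cf \<and> be @ cv cf j \<in> L}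
                   else cE cf be)"
  have c: "corr L (Tk Sig S (ck cf)) (ci cf) (cv cf) (cE cf)" using I by (simp add: invc_def)
  have "corr L (Tk Sig S (ck cf')) (ci cf') (cv cf') (cE cf')" unfolding corr_def
  proof
    fix x assume x: "x \<in> Tk Sig S (ck cf')"
    show "cE cf' x = {cv cf' j | j. j \<le> ci cf' \<and> x @ cv cf' j \<in> L}"
    proof (cases "x \<in> Tk Sig S (ck cf)")
      case True
      then have "cE cf' x = cE cf x" using A by simp
      then show ?thesis using True A c unfolding corr_def by simp
    next
      case False then show ?thesis using A x by simp
    qed
  qed
  then show ?thesis using I A unfolding invc_def by simp
qed

lemma Eo_cong: "(\<forall>y. z = Some y \<longrightarrow> E1 y = E2 y) \<Longrightarrow> Eo E1 z = Eo E2 z"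
  by (cases z) auto

lemma enabled_cong:
  assumes h: "\<forall>y\<in>Tset Sig P. E1 y = E2 y"
  shows "refine_enabled Sig P E1 \<longleftrightarrow> refine_enabled Sig P E2"
proof -
  have h1: "Eo E1 al = Eo E2 al" if "al \<in> Pd P" for al
    using that h by (intro Eo_cong) (auto simp: Pd_def Tset_def)
  have h2: "Eo E1 (fext al b) = Eo E2 (fext al b)" if "al \<in> Pd P" "b \<in> Sig" for al b
    using that h by (intro Eo_cong) (cases al; auto simp: Pd_def Tset_def)
  show ?thesis unfolding refine_enabled_def
  proof
    assume "\<exists>al\<in>Pd P. \<exists>be\<in>Pd P. \<exists>b\<in>Sig. Eo E1 al = Eo E1 be \<and> Eo E1 (fext al b) \<noteq> Eo E1 (fext be b)"
    then show "\<exists>al\<in>Pd P. \<exists>be\<in>Pd P. \<exists>b\<in>Sig. Eo E2 al = Eo E2 be \<and> Eo E2 (fext al b) \<noteq> Eo E2 (fext be b)"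
      using h1 h2 by metis
  next
    assume "\<exists>al\<in>Pd P. \<exists>be\<in>Pd P. \<exists>b\<in>Sig. Eo E2 al = Eo E2 be \<and> Eo E2 (fext al b) \<noteq> Eo E2 (fext be b)"
    then show "\<exists>al\<in>Pd P. \<exists>be\<in>Pd P. \<exists>b\<in>Sig. Eo E1 al = Eo E1 be \<and> Eo E1 (fext al b) \<noteq> Eo E1 (fext be b)"
      using h1 h2 by metis
  qed
qed



context
  fixes Sig :: "'a set" and L :: "'a list set" and S :: "'a list list" and c :: "nat \<Rightarrow> 'a ids_cfg"
  assumes run: "ids_run Sig L S c"
begin

lemma c0: "c 0 = ids_init Sig L S" using run by (simp add: ids_run_def)

lemma cstep: "ids_step Sig L S (c t) (c (Suc t)) \<or> ((\<nexists>c'. ids_step Sig L S (c t) c') \<and> c (Suc t) = c t)"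
  using run by (simp add: ids_run_def)

lemma inv0: "invc Sig L S (c 0)"
proof -
  have "corr L (Tk Sig S 0) 0 (\<lambda>_. []) (E_init L (Tk Sig S 0))"
    unfolding corr_def E_init_def by auto
  then show ?thesis unfolding c0 ids_init_def invc_def by simp
qed

lemma invc_all: "invc Sig L S (c t)"
proof (induction t)
  case 0 show ?case by (rule inv0)
next
  case (Suc t)
  from cstep[of t] show ?case
  proof
    assume "ids_step Sig L S (c t) (c (Suc t))" then show ?thesis using invc_step Suc by blast
  next
    assume "(\<nexists>c'. ids_step Sig L S (c t) c') \<and> c (Suc t) = c t" then show ?thesis using Suc by simp
  qed
qed

lemma tprops: "ci (c t) \<le> ci (c (Suc t)) \<and> ci (c (Suc t)) \<le> Suc (ci (c t)) \<and> ck (c t) \<le> ck (c (Suc t)) \<and>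
   (\<forall>j\<le>ci (c t). cv (c (Suc t)) j = cv (c t) j)"
proof -
  from cstep[of t] show ?thesis
  proof
    assume "ids_step Sig L S (c t) (c (Suc t))"
    from ids_step_cases[OF this] show ?thesis by auto
  next
    assume "(\<nexists>c'. ids_step Sig L S (c t) c') \<and> c (Suc t) = c t" then show ?thesis by simp
  qed
qed

lemma isuc:
  assumes "ci (c (Suc t)) = Suc (ci (c t))"
  shows "ck (c (Suc t)) = ck (c t) \<and> refine_step Sig L (Pk S (ck (c t))) (Tk Sig S (ck (c t)))
     (ci (c t), cv (c t), cE (c t)) (ci (c (Suc t)), cv (c (Suc t)), cE (c (Suc t)))"
proof -
  from cstep[of t] show ?thesis
  proof
    assume "ids_step Sig L S (c t) (c (Suc t))"
    from ids_step_cases[OF this] show ?thesis using assms by auto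
  next
    assume "(\<nexists>c'. ids_step Sig L S (c t) c') \<and> c (Suc t) = c t" then show ?thesis using assms by simp
  qed
qed

lemma i_mono: "t1 \<le> t2 \<Longrightarrow> ci (c t1) \<le> ci (c t2)"
  by (rule lift_Suc_mono_le[of "\<lambda>t. ci (c t)"]) (use tprops in auto)

lemma stab: "t1 \<le> t2 \<Longrightarrow> j \<le> ci (c t1) \<Longrightarrow> cv (c t2) j = cv (c t1) j"
proof (induction t2)
  case 0 then show ?case by simp
next
  case (Suc n)
  show ?case
  proof (cases "t1 = Suc n")
    case True then show ?thesis by simp
  next
    case False
    then have "t1 \<le> n" using Suc by simp
    then have "j \<le> ci (c n)" using Suc i_mono le_trans by blast
    then show ?thesis using Suc \<open>t1 \<le> n\<close> tprops[of n] by simp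
  qed
qed

lemma vn_eq: "ci (c t1) = ci (c t2) \<Longrightarrow> cv (c t1) = cv (c t2)"
proof -
  have *: "cv (c t1) = cv (c t2)" if "ci (c t1) = ci (c t2)" "t1 \<le> t2" for t1 t2
  proof
    fix j
    show "cv (c t1) j = cv (c t2) j"
    proof (cases "j \<le> ci (c t1)")
      case True then show ?thesis using stab that by simp
    next
      case False then show ?thesis using invc_all[of t1] invc_all[of t2] that unfolding invc_def by simp
    qed
  qed
  assume h: "ci (c t1) = ci (c t2)"
  show ?thesis
  proof (cases "t1 \<le> t2")
    case True then show ?thesis using *[OF h] by simp
  next
    case False then have "t2 \<le> t1" by simp
    then show ?thesis using *[of t2 t1] h by simp
  qed
qed

lemma vsame: "ci (c t1) \<le> ci (c t2) \<Longrightarrow> j \<le> ci (c t1) \<Longrightarrow> cv (c t1) j = cv (c t2) j"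
proof (cases "t1 \<le> t2")
  case True
  assume "j \<le> ci (c t1)" then show ?thesis using stab True by simp
next
  case False
  assume a: "ci (c t1) \<le> ci (c t2)"
  have "ci (c t2) \<le> ci (c t1)" using False i_mono by simp
  then have "cv (c t1) = cv (c t2)" using a by (intro vn_eq) simp
  then show ?thesis by simp
qed

lemma enabled_next:
  assumes en: "refine_enabled Sig (Pk S (ck (c t))) (cE (c t))"
  shows "ck (c (Suc t)) = ck (c t) \<and> refine_step Sig L (Pk S (ck (c t))) (Tk Sig S (ck (c t)))
     (ci (c t), cv (c t), cE (c t)) (ci (c (Suc t)), cv (c (Suc t)), cE (c (Suc t)))"
proof -
  from cstep[of t] show ?thesis
  proof
    assume "ids_step Sig L S (c t) (c (Suc t))"
    from ids_step_cases[OF this] show ?thesis using en by auto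
  next
    assume st: "(\<nexists>c'. ids_step Sig L S (c t) c') \<and> c (Suc t) = c t"
    obtain i' v' E' where "refine_step Sig L (Pk S (ck (c t))) (Tk Sig S (ck (c t))) (ci (c t), cv (c t), cE (c t)) (i', v', E')"
      using enabled_step[OF en] by (metis prod_cases3)
    then have "ids_step Sig L S (c t) (Cfg (ck (c t)) i' v' E')" unfolding ids_step_def by simp
    then show ?thesis using st by blast
  qed
qed

lemma reach:
  assumes h0: "ck (c t0) = m"
  shows "\<exists>t\<ge>t0. ck (c t) = m \<and> \<not> refine_enabled Sig (Pk S m) (cE (c t))"
proof (rule ccontr)
  assume H: "\<not> ?thesis"
  define \<mu> where "\<mu> t = card (Eo (cE (c t)) ` Pd (Pk S m))" for t
  have fin: "finite (Pk S m)" by (simp add: Pk_def)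
  have finP: "finite (Pd (Pk S m))" using fin by (simp add: Pd_def)
  have A: "ck (c (t0+j)) = m \<and> j \<le> \<mu> (t0+j)" for j
  proof (induction j)
    case 0 then show ?case using h0 by simp
  next
    case (Suc j)
    then have ck: "ck (c (t0+j)) = m" and le: "j \<le> \<mu> (t0+j)" by auto
    have en: "refine_enabled Sig (Pk S (ck (c (t0+j)))) (cE (c (t0+j)))" using H ck by auto
    have N: "ck (c (Suc (t0+j))) = m" and R: "refine_step Sig L (Pk S m) (Tk Sig S m)
     (ci (c (t0+j)), cv (c (t0+j)), cE (c (t0+j))) (ci (c (Suc (t0+j))), cv (c (Suc (t0+j))), cE (c (Suc (t0+j))))"
      using enabled_next[OF en] ck by auto
    have co: "corr L (Tk Sig S m) (ci (c (t0+j))) (cv (c (t0+j))) (cE (c (t0+j)))"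
      using invc_all[of "t0+j"] ck unfolding invc_def by simp
    have "\<mu> (t0+j) < \<mu> (Suc (t0+j))" unfolding \<mu>_def using card_incr[OF fin co closed_Tk R] .
    then show ?case using N le by simp
  qed
  have "\<mu> t \<le> card (Pd (Pk S m))" for t unfolding \<mu>_def using card_image_le[OF finP] .
  then show False using A[of "Suc (card (Pd (Pk S m)))"] by (metis Suc_n_not_le_n le_trans)
qed

lemma reach_k: "m \<le> length S \<Longrightarrow> \<exists>t. ck (c t) = m \<and> \<not> refine_enabled Sig (Pk S m) (cE (c t))"
proof (induction m)
  case 0
  have "ck (c 0) = 0" using c0 by (simp add: ids_init_def)
  then show ?case using reach by blast
next
  case (Suc m)
  then obtain t where t: "ck (c t) = m" "\<not> refine_enabled Sig (Pk S m) (cE (c t))" by auto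
  have lt: "m < length S" using Suc by simp
  have "ck (c (Suc t)) = Suc m"
  proof -
    from cstep[of t] show ?thesis
    proof
      assume "ids_step Sig L S (c t) (c (Suc t))"
      from ids_step_cases[OF this] show ?thesis using t step_enabled by blast
    next
      assume st: "(\<nexists>c'. ids_step Sig L S (c t) c') \<and> c (Suc t) = c t"
      have "ids_step Sig L S (c t) (Cfg (Suc (ck (c t))) (ci (c t)) (cv (c t))
             (\<lambda>be. if be \<in> Tk Sig S (Suc (ck (c t))) - Tk Sig S (ck (c t))
                   then {cv (c t) j | j. j \<le> ci (c t) \<and> be @ cv (c t) j \<in> L}
                   else cE (c t) be))"
        unfolding ids_step_def using t lt by simp
      then show ?thesis using st by blast
    qed
  qed
  then show ?case using reach by blast
qed

lemma ex_i: "n \<le> ci (c t) \<Longrightarrow> \<exists>t'. ci (c t') = n"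
proof (induction t)
  case 0 then have "ci (c 0) = n" using c0 by (simp add: ids_init_def)
  then show ?case by blast
next
  case (Suc t)
  show ?case
  proof (cases "n \<le> ci (c t)")
    case True then show ?thesis using Suc by blast
  next
    case False then have "n = ci (c (Suc t))" using Suc tprops[of t] by simp
    then show ?thesis by blast
  qed
qed

lemma ex_suc: "n < ci (c t) \<Longrightarrow> \<exists>s. ci (c s) = n \<and> ci (c (Suc s)) = Suc n"
proof (induction t)
  case 0 then show ?case using c0 by (simp add: ids_init_def)
next
  case (Suc t)
  show ?case
  proof (cases "n < ci (c t)")
    case True then show ?thesis using Suc by blast
  next
    case False then have "n = ci (c t)" "ci (c (Suc t)) = Suc n" using Suc tprops[of t] by auto
    then show ?thesis by blast
  qed
qed

lemma final_const:
  assumes tf: "ck (c tf) = length S" "\<not> refine_enabled Sig (Pk S (length S)) (cE (c tf))"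
  shows "c (tf + j) = c tf"
proof (induction j)
  case 0 then show ?case by simp
next
  case (Suc j)
  have "\<not> ids_step Sig L S (c tf) c'" for c'
  proof
    assume "ids_step Sig L S (c tf) c'"
    from ids_step_cases[OF this] show False using tf step_enabled by fastforce
  qed
  then show ?case using cstep[of "tf + j"] Suc by auto
qed

end


lemma main_gen:
  fixes Sig :: "'a set" and L :: "'a list set" and S :: "'a list list" and c :: "nat \<Rightarrow> 'a ids_cfg"
  assumes run: "ids_run Sig L S c"
  shows "\<exists>d. id_run Sig L (insert [] (set S)) d \<and>
    (\<forall>m.
      (\<forall>n. Kis c n m \<longrightarrow>
         ((\<exists>t'. n \<le> id_i (d t')) \<and>
          (\<forall>t t'. ci (c t) = n \<longrightarrow> n \<le> id_i (d t') \<longrightarrow>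
                  (\<forall>j\<le>n. cv (c t) j = id_v (d t') j))) \<and>
         (\<forall>t. ci (c t) = n \<longrightarrow> (\<forall>j<n. cv (c t) n \<noteq> cv (c t) j)) \<and>
         (\<forall>t. ci (c t) = n \<and> ck (c t) = m \<longrightarrow>
            (\<forall>al\<in>Tk Sig S m. cE (c t) al =
               {cv (c t) j | j. j \<le> n \<and> al @ cv (c t) j \<in> L}))) \<and>
      (0 < m \<longrightarrow>
        (\<forall>p. Kis c p (m - 1) \<and> (\<forall>q. Kis c q (m - 1) \<longrightarrow> q \<le> p) \<longrightarrow>
          (\<forall>t. ci (c t) = p \<and> ck (c t) = m \<longrightarrow>
            (\<forall>al\<in>Tk Sig S m. cE (c t) al =
               {cv (c t) j | j. j \<le> p \<and> al @ cv (c t) j \<in> L})))) \<and>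
      (m \<le> length S \<longrightarrow>
        (\<exists>t. ck (c t) = m \<and> \<not> refine_enabled Sig (Pk S m) (cE (c t)))))"
proof -
  obtain tf where tf: "ck (c tf) = length S" "\<not> refine_enabled Sig (Pk S (length S)) (cE (c tf))"
    using reach_k[OF run, of "length S"] by auto
  define N where "N = ci (c tf)"
  have ibound: "ci (c t) \<le> N" for t
  proof (cases "t \<le> tf")
    case True then show ?thesis unfolding N_def using i_mono[OF run] by simp
  next
    case False
    then have "c t = c tf" using final_const[OF run tf, of "t - tf"] by simp
    then show ?thesis unfolding N_def by simp
  qed
  define PP where "PP = insert [] (set S)"
  define TT where "TT = Tset Sig PP"
  have PPk: "Pk S (length S) = PP" unfolding Pk_def PP_def by simp
  have TTk: "Tk Sig S (length S) = TT" unfolding Tk_def TT_def PPk ..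
  have Psub: "Pk S k \<subseteq> PP" for k unfolding Pk_def PP_def using set_take_subset by fastforce
  have Tsub: "Tk Sig S k \<subseteq> TT" for k using Psub[of k] unfolding Tk_def TT_def Tset_def by blast
  define Vn where "Vn n = cv (c (SOME t. ci (c t) = n))" for n
  have Vn: "Vn n = cv (c t)" if "ci (c t) = n" for n t
  proof -
    have "ci (c (SOME t. ci (c t) = n)) = n" using someI[of "\<lambda>t. ci (c t) = n", OF that] .
    then have "ci (c (SOME t. ci (c t) = n)) = ci (c t)" using that by simp
    then show ?thesis unfolding Vn_def by (rule vn_eq[OF run])
  qed
  define EID where "EID n x = (if x \<in> TT then {Vn n j | j. j \<le> n \<and> x @ Vn n j \<in> L} else {})" for n x
  have EIDag: "EID n x = cE (c t) x" if "ci (c t) = n" "x \<in> Tk Sig S (ck (c t))" for n x t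
  proof -
    have "corr L (Tk Sig S (ck (c t))) (ci (c t)) (cv (c t)) (cE (c t))"
      using invc_all[OF run, of t] unfolding invc_def by simp
    then have "cE (c t) x = {cv (c t) j | j. j \<le> n \<and> x @ cv (c t) j \<in> L}"
      using that unfolding corr_def by simp
    moreover have "x \<in> TT" using that Tsub by blast
    ultimately show ?thesis unfolding EID_def using Vn[OF that(1)] by simp
  qed
  define d where "d t = (min t N, Vn (min t N), EID (min t N))" for t
  have idr: "id_run Sig L PP d"
    unfolding id_run_def
  proof (intro conjI allI)
    have v0: "Vn 0 = (\<lambda>_. [])" using Vn[of 0 0] c0[OF run] by (simp add: ids_init_def)
    have "EID 0 = E_init L TT"
    proof
      fix x show "EID 0 x = E_init L TT x" unfolding EID_def E_init_def v0 TT_def by auto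
    qed
    then show "d 0 = (0, \<lambda>_. [], E_init L (Tset Sig PP))" unfolding d_def TT_def using v0 by simp
  next
    fix t
    show "refine_step Sig L PP (Tset Sig PP) (d t) (d (Suc t)) \<or>
          (\<nexists>st. refine_step Sig L PP (Tset Sig PP) (d t) st) \<and> d (Suc t) = d t"
    proof (cases "t < N")
      case True
      obtain s where s: "ci (c s) = t" "ci (c (Suc s)) = Suc t"
        using ex_suc[OF run, of t tf] True unfolding N_def by auto
      define k where "k = ck (c s)"
      have R: "refine_step Sig L (Pk S k) (Tk Sig S k) (ci (c s), cv (c s), cE (c s))
          (ci (c (Suc s)), cv (c (Suc s)), cE (c (Suc s)))"
        using isuc[OF run, of s] s unfolding k_def by simp
      then obtain al be b ga where G: "al \<in> Pd (Pk S k)" "be \<in> Pd (Pk S k)" "b \<in> Sig"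
        "Eo (cE (c s)) al = Eo (cE (c s)) be"
        "Eo (cE (c s)) (fext al b) \<noteq> Eo (cE (c s)) (fext be b)"
        "ga \<in> symdiff (Eo (cE (c s)) (fext al b)) (Eo (cE (c s)) (fext be b))"
        "cv (c (Suc s)) = (cv (c s))(Suc (ci (c s)) := b # ga)"
        using R unfolding refine_step_def prod.case prod.inject by blast
      have ag: "Eo (EID t) z = Eo (cE (c s)) z" if "z \<in> Pd (Pk S k)" for z
        using that EIDag[OF s(1)] closed_Tk[of Sig S k] unfolding k_def[symmetric]
        by (intro Eo_cong) (auto simp: Pd_def closedP_def)
      have agf: "Eo (EID t) (fext z b) = Eo (cE (c s)) (fext z b)" if "z \<in> Pd (Pk S k)" for z
        using that EIDag[OF s(1)] closed_Tk[of Sig S k] G(3) unfolding k_def[symmetric]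
        by (intro Eo_cong) (cases z; auto simp: Pd_def closedP_def)
      have PdS: "Pd (Pk S k) \<subseteq> Pd PP" using Psub[of k] unfolding Pd_def by auto
      have vt: "Vn t = cv (c s)" using Vn[OF s(1)] .
      have vst: "Vn (Suc t) = (Vn t)(Suc t := b # ga)" using Vn[OF s(2)] G(7) s(1) vt by simp
      have est: "EID (Suc t) = (\<lambda>x. if x \<in> TT \<and> x @ (b # ga) \<in> L then EID t x \<union> {b # ga} else EID t x)"
      proof
        fix x show "EID (Suc t) x = (if x \<in> TT \<and> x @ (b # ga) \<in> L then EID t x \<union> {b # ga} else EID t x)"
          unfolding EID_def vst set_upd by simp
      qed
      have dt: "d t = (t, Vn t, EID t)" "d (Suc t) = (Suc t, (Vn t)(Suc t := b # ga),
          (\<lambda>x. if x \<in> TT \<and> x @ (b # ga) \<in> L then EID t x \<union> {b # ga} else EID t x))"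
        using True vst est unfolding d_def by auto
      have "refine_step Sig L PP TT (d t) (d (Suc t))"
        unfolding refine_step_def dt prod.case
        using G(1-6) PdS ag agf by (intro bexI[of _ al] bexI[of _ be] bexI[of _ b] exI[of _ ga]) auto
      then show ?thesis unfolding TT_def by simp
    next
      case False
      have dt: "d t = (N, Vn N, EID N)" "d (Suc t) = d t" using False unfolding d_def by auto
      have "\<nexists>st. refine_step Sig L PP TT (d t) st"
      proof
        assume "\<exists>st. refine_step Sig L PP TT (d t) st"
        then have "refine_enabled Sig PP (EID N)" unfolding dt using step_enabled by blast
        moreover have "\<forall>y\<in>Tset Sig PP. EID N y = cE (c tf) y"
          using EIDag[of tf N] tf TTk unfolding N_def TT_def by simp
        ultimately have "refine_enabled Sig PP (cE (c tf))" using enabled_cong by blast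
        then show False using tf PPk by simp
      qed
      then show ?thesis using dt unfolding TT_def by simp
    qed
  qed
  show ?thesis
  proof (intro exI[of _ d] conjI allI impI ballI)
    show "id_run Sig L (insert [] (set S)) d" using idr unfolding PP_def .
  next
    fix m n assume K: "Kis c n m"
    then obtain t0 where t0: "ci (c t0) = n" unfolding Kis_def by auto
    have nN: "n \<le> N" using t0 ibound by metis
    show "\<exists>t'. n \<le> id_i (d t')" using nN unfolding d_def by (intro exI[of _ N]) simp
  next
    fix m n t t' j assume "Kis c n m" "ci (c t) = n" "n \<le> id_i (d t')" "j \<le> n"
    then have h: "ci (c t) = n" "n \<le> min t' N" "j \<le> n" unfolding d_def by auto
    obtain t'' where t'': "ci (c t'') = min t' N" using ex_i[OF run, of "min t' N" tf] unfolding N_def by auto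
    have "id_v (d t') = cv (c t'')" unfolding d_def using Vn[OF t''] by simp
    then show "cv (c t) j = id_v (d t') j" using vsame[OF run, of t t'' j] h t'' by simp
  next
    fix m n t j assume "Kis c n m" "ci (c t) = n" "j < n"
    then show "cv (c t) n \<noteq> cv (c t) j" using invc_all[OF run, of t] unfolding invc_def inj_on_def
      by (metis atMost_iff less_imp_le_nat order_refl less_irrefl)
  next
    fix m n t al assume "Kis c n m" "ci (c t) = n \<and> ck (c t) = m" "al \<in> Tk Sig S m"
    then show "cE (c t) al = {cv (c t) j | j. j \<le> n \<and> al @ cv (c t) j \<in> L}"
      using invc_all[OF run, of t] unfolding invc_def corr_def by auto
  next
    fix m p t al assume "0 < m" "Kis c p (m - 1) \<and> (\<forall>q. Kis c q (m - 1) \<longrightarrow> q \<le> p)" "ci (c t) = p \<and> ck (c t) = m" "al \<in> Tk Sig S m"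
    then show "cE (c t) al = {cv (c t) j | j. j \<le> p \<and> al @ cv (c t) j \<in> L}"
      using invc_all[OF run, of t] unfolding invc_def corr_def by auto
  next
    fix m :: nat assume "m \<le> length S"
    then show "\<exists>t. ck (c t) = m \<and> \<not> refine_enabled Sig (Pk S m) (cE (c t))" using reach_k[OF run] by simp
  qed
qed


theorem mainTheorem3:
  fixes Sig :: "'a set" and Q :: "'s set" and delta :: "'s \<Rightarrow> 'a \<Rightarrow> 's"
    and q0 :: 's and F :: "'s set" and S :: "'a list list"
    and c :: "nat \<Rightarrow> 'a ids_cfg"
  assumes "dfa Sig Q delta q0 F"
    and "S \<noteq> []"
    and "\<forall>s\<in>set S. set s \<subseteq> Sig"
    and "ids_run Sig (dfa_lang Sig delta q0 F) S c"
  shows "\<exists>d. id_run Sig (dfa_lang Sig delta q0 F) (insert [] (set S)) d \<and>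
    (\<forall>m.
      (\<forall>n. Kis c n m \<longrightarrow>
         ((\<exists>t'. n \<le> id_i (d t')) \<and>
          (\<forall>t t'. ci (c t) = n \<longrightarrow> n \<le> id_i (d t') \<longrightarrow>
                  (\<forall>j\<le>n. cv (c t) j = id_v (d t') j))) \<and>
         (\<forall>t. ci (c t) = n \<longrightarrow> (\<forall>j<n. cv (c t) n \<noteq> cv (c t) j)) \<and>
         (\<forall>t. ci (c t) = n \<and> ck (c t) = m \<longrightarrow>
            (\<forall>al\<in>Tk Sig S m. cE (c t) al =
               {cv (c t) j | j. j \<le> n \<and> al @ cv (c t) j \<in> dfa_lang Sig delta q0 F}))) \<and>
      (0 < m \<longrightarrow>
        (\<forall>p. Kis c p (m - 1) \<and> (\<forall>q. Kis c q (m - 1) \<longrightarrow> q \<le> p) \<longrightarrow>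
          (\<forall>t. ci (c t) = p \<and> ck (c t) = m \<longrightarrow>
            (\<forall>al\<in>Tk Sig S m. cE (c t) al =
               {cv (c t) j | j. j \<le> p \<and> al @ cv (c t) j \<in> dfa_lang Sig delta q0 F})))) \<and>
      (m \<le> length S \<longrightarrow>
        (\<exists>t. ck (c t) = m \<and> \<not> refine_enabled Sig (Pk S m) (cE (c t)))))"
  using main_gen[OF assms(4)] by simp

end
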